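(* Every admissible sequence $i_n\cdots i_1$ with $i_1=1$ is equivalent to a sequence of one of the following seven types: 1. $(213)^m(21)^n$; 2. $3(213)^m(21)^n$; 3. $13(213)^m(21)^n$; 4. $(312)^m(31)^n$; 5. $2(312)^m(31)^n$; 6. $12(312)^m(31)^n$; 7. $1(21)^n$ (which is equivalent to $1(31)^n$). Here $m\ge0$ and $n\ge1$ in types 1–6, and $n\ge0$ in type 7. Moreover, this list is closed under prepending: if $\alpha$ is of one of these types and $i\in\{1,2,3\}$ differs from the first (leftmost) index of $\alpha$, then $i\alpha$ is equivalent to a sequence of one of these types.
   Context: A finite sequence $s=i_n i_{n-1}\cdots i_1$ with $i_p\in\{1,2,3\}$ (written as a word read from left to right, with $i_1$ the rightmost letter) is called admissible if adjacent indices are distinct ($i_p\neq i_{p+1}$). Admissible sequences are considered up to the equivalence relation generated by replacing any consecutive subword $iji$ by $iki$, where $\{i,j,k\}=\{1,2,3\}$. Powers denote repeated concatenation, e.g. $(21)^2=2121$ and $(213)^0$ is empty. *)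

theory Defs
  imports Main
begin

text \<open>A sequence i_n ... i_1 is represented as the list [i_n, ..., i_1]:
  the head is the leftmost letter i_n, the last element is i_1.\<close>

definition admissible :: "nat list \<Rightarrow> bool" where
  "admissible s \<longleftrightarrow> set s \<subseteq> {1,2,3} \<and> (\<forall>p. Suc p < length s \<longrightarrow> s ! p \<noteq> s ! Suc p)"

definition move :: "nat list \<Rightarrow> nat list \<Rightarrow> bool" where
  "move s t \<longleftrightarrow> (\<exists>u v i j k. {i,j,k} = {1,2,3} \<and> s = u @ [i,j,i] @ v \<and> t = u @ [i,k,i] @ v)"

definition equiv_seq :: "nat list \<Rightarrow> nat list \<Rightarrow> bool" where
  "equiv_seq = equivclp move"

definition pw :: "nat list \<Rightarrow> nat \<Rightarrow> nat list" where
  "pw w m = concat (replicate m w)"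

definition of_listed_type :: "nat list \<Rightarrow> bool" where
  "of_listed_type s \<longleftrightarrow>
     (\<exists>m n. n \<ge> 1 \<and>
        (s = pw [2,1,3] m @ pw [2,1] n
       \<or> s = [3] @ pw [2,1,3] m @ pw [2,1] n
       \<or> s = [1,3] @ pw [2,1,3] m @ pw [2,1] n
       \<or> s = pw [3,1,2] m @ pw [3,1] n
       \<or> s = [2] @ pw [3,1,2] m @ pw [3,1] n
       \<or> s = [1,2] @ pw [3,1,2] m @ pw [3,1] n))
   \<or> (\<exists>n. s = [1] @ pw [2,1] n)"

end

theory Submission
  imports Defs
begin

lemma eq_trans: "equiv_seq a b \<Longrightarrow> equiv_seq b c \<Longrightarrow> equiv_seq a c"
  unfolding equiv_seq_def by (rule equivclp_trans)

lemma eq_sym: "equiv_seq a b \<Longrightarrow> equiv_seq b a"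
  unfolding equiv_seq_def by (rule equivclp_sym)

lemma eq_refl: "equiv_seq a a"
  unfolding equiv_seq_def by simp

lemma move_ctx: "move s t \<Longrightarrow> move (u @ s @ v) (u @ t @ v)"
  unfolding move_def
  by (metis append.assoc)

lemma eq_ctx: "equiv_seq s t \<Longrightarrow> equiv_seq (u @ s @ v) (u @ t @ v)"
  unfolding equiv_seq_def
proof (induction rule: equivclp_induct)
  case base
  then show ?case by simp
next
  case (step y z)
  then show ?case
    by (meson equivclp_into_equivclp move_ctx)
qed

lemma eq_pre: "equiv_seq s t \<Longrightarrow> equiv_seq (u @ s) (u @ t)"
  using eq_ctx[of s t u "[]"] by simp

lemma eq_cons: "equiv_seq s t \<Longrightarrow> equiv_seq (x # s) (x # t)"
  using eq_pre[of s t "[x]"] by simp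

lemma eq_post: "equiv_seq s t \<Longrightarrow> equiv_seq (s @ v) (t @ v)"
  using eq_ctx[of s t "[]" v] by simp

lemma mv: "{i,j,k} = {1,2,3} \<Longrightarrow> s = u @ [i,j,i] @ v \<Longrightarrow> t = u @ [i,k,i] @ v \<Longrightarrow> equiv_seq s t"
  unfolding equiv_seq_def move_def by blast

lemma move_hd': "move s t \<Longrightarrow> hd s = hd t"
  unfolding move_def by (auto simp: hd_append)

lemma eq_hd: "equiv_seq s t \<Longrightarrow> hd s = hd t"
  unfolding equiv_seq_def
proof (induction rule: equivclp_induct)
  case base
  then show ?case by simp
next
  case (step y z)
  then show ?case using move_hd' by metis
qed

lemma pw_Suc: "pw w (Suc m) = w @ pw w m"
  unfolding pw_def by simp

lemma pw_Suc': "pw w (Suc m) = pw w m @ w"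
  unfolding pw_def by (simp add: replicate_append_same[symmetric])

lemma pw_0: "pw w 0 = []"
  unfolding pw_def by simp

definition AB :: "nat \<Rightarrow> nat \<Rightarrow> bool" where
  "AB a b \<longleftrightarrow> (a = 2 \<and> b = 3) \<or> (a = 3 \<and> b = 2)"

lemma lemA: "AB a b \<Longrightarrow> equiv_seq ([a,1,a,1,b,a] @ v) ([a,1,b,a,1,a] @ v)"
proof -
  assume h: "AB a b"
  have 1: "equiv_seq ([a,1,a,1,b,a] @ v) ([a,1,b,1,b,a] @ v)"
    by (rule mv[of 1 a b _ "[a]" "[b,a] @ v"]) (use h in \<open>auto simp: AB_def\<close>)
  have 2: "equiv_seq ([a,1,b,1,b,a] @ v) ([a,1,b,a,b,a] @ v)"
    by (rule mv[of b 1 a _ "[a,1]" "a # v"]) (use h in \<open>auto simp: AB_def\<close>)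
  have 3: "equiv_seq ([a,1,b,a,b,a] @ v) ([a,1,b,a,1,a] @ v)"
    by (rule mv[of a b 1 _ "[a,1,b]" "v"]) (use h in \<open>auto simp: AB_def\<close>)
  show ?thesis using 1 2 3 eq_trans by blast
qed

lemma pw_a: "\<exists>w'. pw [a,1,b] m @ a # v = a # w'"
  by (cases m) (auto simp: pw_Suc pw_0)

lemma lemC: "AB a b \<Longrightarrow> equiv_seq ([a,1] @ pw [a,1,b] m @ a # v) (pw [a,1,b] m @ [a,1] @ a # v)"
proof (induction m arbitrary: v)
  case 0
  then show ?case by (simp add: pw_0 eq_refl)
next
  case (Suc m)
  obtain w' where w: "pw [a,1,b] m @ a # v = a # w'" using pw_a by blast
  have 1: "equiv_seq ([a,1,a,1,b,a] @ w') ([a,1,b,a,1,a] @ w')"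
    using lemA[OF Suc.prems] .
  have 2: "equiv_seq ([a,1,b] @ ([a,1] @ pw [a,1,b] m @ a # v)) ([a,1,b] @ (pw [a,1,b] m @ [a,1] @ a # v))"
    using eq_pre[OF Suc.IH[OF Suc.prems]] .
  have 4: "equiv_seq ([a,1] @ pw [a,1,b] (Suc m) @ a # v) ([a,1,b] @ ([a,1] @ pw [a,1,b] m @ a # v))"
    using 1 w by (simp add: pw_Suc)
  show ?case using eq_trans[OF 4 2] by (simp add: pw_Suc)
qed

lemma pw21: "pw [a,1] (Suc n) = [a,1] @ pw [a,1] n"
  by (simp add: pw_Suc)

lemma lemK: "AB a b \<Longrightarrow> n \<ge> 1 \<Longrightarrow>
   equiv_seq (a # b # pw [a,1,b] m @ pw [a,1] n) (pw [a,1,b] m @ pw [a,1] (Suc n))"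
proof -
  assume h: "AB a b" and n: "n \<ge> 1"
  obtain n' where n': "n = Suc n'" using n by (cases n) auto
  have 1: "equiv_seq (a # b # pw [a,1,b] m @ pw [a,1] n) (a # 1 # pw [a,1,b] m @ pw [a,1] n)"
  proof (cases m)
    case 0
    show ?thesis
      by (rule mv[of a b 1 _ "[]" "1 # pw [a,1] n'"]) (use h in \<open>auto simp: AB_def 0 n' pw_0 pw_Suc\<close>)
  next
    case (Suc k)
    show ?thesis
      by (rule mv[of a b 1 _ "[]" "1 # b # pw [a,1,b] k @ pw [a,1] n"]) (use h in \<open>auto simp: AB_def Suc pw_Suc\<close>)
  qed
  have 2: "equiv_seq ([a,1] @ pw [a,1,b] m @ pw [a,1] n) (pw [a,1,b] m @ [a,1] @ pw [a,1] n)"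
    using lemC[OF h, of m "1 # pw [a,1] n'"] n' by (simp add: pw_Suc)
  show ?thesis using eq_trans[OF 1] 2 by (simp add: pw_Suc)
qed

lemma lem7: "AB a b \<Longrightarrow> equiv_seq (1 # pw [a,1] n) (1 # pw [b,1] n)"
proof (induction n)
  case 0
  then show ?case by (simp add: pw_0 eq_refl)
next
  case (Suc n)
  have 1: "equiv_seq (1 # pw [a,1] (Suc n)) ([1,b] @ (1 # pw [a,1] n))"
    by (rule mv[of 1 a b _ "[]" "pw [a,1] n"]) (use Suc.prems in \<open>auto simp: AB_def pw_Suc\<close>)
  have 2: "equiv_seq ([1,b] @ (1 # pw [a,1] n)) ([1,b] @ (1 # pw [b,1] n))"
    using eq_pre[OF Suc.IH[OF Suc.prems]] .
  show ?case using eq_trans[OF 1 2] by (simp add: pw_Suc)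
qed

definition A :: "nat \<Rightarrow> nat \<Rightarrow> nat \<Rightarrow> nat \<Rightarrow> nat list" where
  "A a b m n = pw [a,1,b] m @ pw [a,1] n"

lemma listed_A: "AB a b \<Longrightarrow> n \<ge> 1 \<Longrightarrow> of_listed_type (A a b m n)"
  unfolding of_listed_type_def AB_def A_def by auto

lemma listed_bA: "AB a b \<Longrightarrow> n \<ge> 1 \<Longrightarrow> of_listed_type (b # A a b m n)"
  unfolding of_listed_type_def AB_def A_def by auto

lemma listed_1bA: "AB a b \<Longrightarrow> n \<ge> 1 \<Longrightarrow> of_listed_type (1 # b # A a b m n)"
  unfolding of_listed_type_def AB_def A_def by auto

lemma listed_7: "of_listed_type (1 # pw [2,1] n)"
  unfolding of_listed_type_def by auto

lemma listed_7': "AB a b \<Longrightarrow> \<exists>t. of_listed_type t \<and> equiv_seq (1 # pw [a,1] n) t"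
proof -
  assume h: "AB a b"
  show ?thesis
  proof (cases "a = 2")
    case True
    then show ?thesis using listed_7 eq_refl by blast
  next
    case False
    then have "b = 2" using h by (auto simp: AB_def)
    then show ?thesis using listed_7 lem7[OF h, of n] by blast
  qed
qed

lemma hdA: "n \<ge> 1 \<Longrightarrow> hd (A a b m n) = a"
  unfolding A_def by (cases m; cases n) (auto simp: pw_Suc pw_0)

lemma AB_sym: "AB a b \<Longrightarrow> AB b a"
  unfolding AB_def by auto

lemma prepA: "AB a b \<Longrightarrow> n \<ge> 1 \<Longrightarrow> i \<in> {1,2,3} \<Longrightarrow> i \<noteq> a \<Longrightarrow>
   \<exists>t. of_listed_type t \<and> equiv_seq (i # A a b m n) t"
proof -
  assume h: "AB a b" and n: "n \<ge> 1" and i: "i \<in> {1,2,3}" "i \<noteq> a"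
  have "i = 1 \<or> i = b" using h i by (auto simp: AB_def)
  then show ?thesis
  proof
    assume "i = b"
    then show ?thesis using listed_bA[OF h n] eq_refl by blast
  next
    assume i1: "i = 1"
    show ?thesis
    proof (cases m)
      case 0
      then show ?thesis using listed_7'[OF h, of n] i1 by (simp add: A_def pw_0)
    next
      case (Suc k)
      have 1: "equiv_seq (1 # A a b m n) (1 # b # 1 # b # pw [a,1,b] k @ pw [a,1] n)"
        by (rule mv[of 1 a b _ "[]" "b # pw [a,1,b] k @ pw [a,1] n"])
          (use h in \<open>auto simp: AB_def Suc pw_Suc A_def\<close>)
      have 2: "equiv_seq (1 # b # 1 # b # pw [a,1,b] k @ pw [a,1] n) ([1,b] @ (a # b # pw [a,1,b] k @ pw [a,1] n))"
        by (rule mv[of b 1 a _ "[1]" "pw [a,1,b] k @ pw [a,1] n"])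
          (use h in \<open>auto simp: AB_def\<close>)
      have 3: "equiv_seq ([1,b] @ (a # b # pw [a,1,b] k @ pw [a,1] n)) ([1,b] @ (pw [a,1,b] k @ pw [a,1] (Suc n)))"
        using eq_pre[OF lemK[OF h n]] .
      have "equiv_seq (i # A a b m n) (1 # b # A a b k (Suc n))"
        using eq_trans[OF eq_trans[OF 1 2] 3] i1 by (simp add: A_def)
      then show ?thesis using listed_1bA[OF h, of "Suc n" k] by auto
    qed
  qed
qed

lemma prepbA: "AB a b \<Longrightarrow> n \<ge> 1 \<Longrightarrow> i \<in> {1,2,3} \<Longrightarrow> i \<noteq> b \<Longrightarrow>
   \<exists>t. of_listed_type t \<and> equiv_seq (i # b # A a b m n) t"
proof -
  assume h: "AB a b" and n: "n \<ge> 1" and i: "i \<in> {1,2,3}" "i \<noteq> b"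
  have "i = 1 \<or> i = a" using h i by (auto simp: AB_def)
  then show ?thesis
  proof
    assume "i = 1"
    then show ?thesis using listed_1bA[OF h n] eq_refl by blast
  next
    assume "i = a"
    then show ?thesis using lemK[OF h n, of m] listed_A[OF h, of "Suc n" m] by (auto simp: A_def)
  qed
qed

lemma prep1bA: "AB a b \<Longrightarrow> n \<ge> 1 \<Longrightarrow> i \<in> {1,2,3} \<Longrightarrow> i \<noteq> 1 \<Longrightarrow>
   \<exists>t. of_listed_type t \<and> equiv_seq (i # 1 # b # A a b m n) t"
proof -
  assume h: "AB a b" and n: "n \<ge> 1" and i: "i \<in> {1,2,3}" "i \<noteq> 1"
  have "i = b \<or> i = a" using h i by (auto simp: AB_def)
  then show ?thesis
  proof
    assume ia: "i = a"
    have "i # 1 # b # A a b m n = A a b (Suc m) n" using ia by (simp add: A_def pw_Suc)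
    then show ?thesis using listed_A[OF h n, of "Suc m"] eq_refl by metis
  next
    assume ib: "i = b"
    have 1: "equiv_seq (b # 1 # b # A a b m n) ([b] @ (a # b # A a b m n))"
      by (rule mv[of b 1 a _ "[]" "A a b m n"]) (use h in \<open>auto simp: AB_def\<close>)
    have 2: "equiv_seq ([b] @ (a # b # A a b m n)) ([b] @ A a b m (Suc n))"
      using eq_pre[OF lemK[OF h n, of m], of "[b]"] by (simp add: A_def)
    show ?thesis using eq_trans[OF 1 2] ib listed_bA[OF h, of "Suc n" m] by auto
  qed
qed

lemma prep7: "i \<in> {1,2,3} \<Longrightarrow> i \<noteq> 1 \<Longrightarrow>
   \<exists>t. of_listed_type t \<and> equiv_seq (i # 1 # pw [2,1] n) t"
proof -
  assume i: "i \<in> {1,2,3}" "i \<noteq> 1"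
  then have "i = 2 \<or> i = 3" by auto
  then show ?thesis
  proof
    assume "i = 2"
    then have "i # 1 # pw [2,1] n = A 2 3 0 (Suc n)" by (simp add: A_def pw_0 pw_Suc)
    then show ?thesis using listed_A[of 2 3 "Suc n" 0] eq_refl by (metis AB_def le_add1 plus_1_eq_Suc)
  next
    assume i3: "i = 3"
    have h: "AB 2 3" by (simp add: AB_def)
    have 1: "equiv_seq (3 # 1 # pw [2,1] n) (3 # 1 # pw [3,1] n)"
      using eq_cons[OF lem7[OF h]] .
    have "3 # 1 # pw [3,1] n = A 3 2 0 (Suc n)" by (simp add: A_def pw_0 pw_Suc)
    then show ?thesis using 1 i3 listed_A[of 3 2 "Suc n" 0] by (metis AB_def le_add1 plus_1_eq_Suc)
  qed
qed

lemma part3: "of_listed_type \<alpha> \<Longrightarrow> i \<in> {1,2,3} \<Longrightarrow> i \<noteq> hd \<alpha> \<Longrightarrow>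
            (\<exists>t. of_listed_type t \<and> equiv_seq (i # \<alpha>) t)"
proof -
  assume L: "of_listed_type \<alpha>" and i: "i \<in> {1,2,3}" "i \<noteq> hd \<alpha>"
  have h23: "AB 2 3" and h32: "AB 3 2" by (auto simp: AB_def)
  from L[unfolded of_listed_type_def] show ?thesis
  proof (elim disjE exE conjE)
    fix m n assume n: "1 \<le> n" and e: "\<alpha> = pw [2, 1, 3] m @ pw [2, 1] n"
    have "\<alpha> = A 2 3 m n" using e by (simp add: A_def)
    then show ?thesis using prepA[OF h23 n i(1), of m] i(2) hdA[OF n, of 2 3 m] by simp
  next
    fix m n assume n: "1 \<le> n" and e: "\<alpha> = [3] @ pw [2, 1, 3] m @ pw [2, 1] n"
    then show ?thesis using prepbA[OF h23 n i(1), of m] i(2) by (simp add: A_def)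
  next
    fix m n assume n: "1 \<le> n" and e: "\<alpha> = [1,3] @ pw [2, 1, 3] m @ pw [2, 1] n"
    then show ?thesis using prep1bA[OF h23 n i(1), of m] i(2) by (simp add: A_def)
  next
    fix m n assume n: "1 \<le> n" and e: "\<alpha> = pw [3, 1, 2] m @ pw [3, 1] n"
    have "\<alpha> = A 3 2 m n" using e by (simp add: A_def)
    then show ?thesis using prepA[OF h32 n i(1), of m] i(2) hdA[OF n, of 3 2 m] by simp
  next
    fix m n assume n: "1 \<le> n" and e: "\<alpha> = [2] @ pw [3, 1, 2] m @ pw [3, 1] n"
    then show ?thesis using prepbA[OF h32 n i(1), of m] i(2) by (simp add: A_def)
  next
    fix m n assume n: "1 \<le> n" and e: "\<alpha> = [1,2] @ pw [3, 1, 2] m @ pw [3, 1] n"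
    then show ?thesis using prep1bA[OF h32 n i(1), of m] i(2) by (simp add: A_def)
  next
    fix n assume e: "\<alpha> = [1] @ pw [2, 1] n"
    then show ?thesis using prep7[OF i(1), of n] i(2) by simp
  qed
qed

lemma adm_tl: "admissible (x # s) \<Longrightarrow> admissible s"
  unfolding admissible_def
proof (intro conjI allI impI)
  assume a: "set (x # s) \<subseteq> {1, 2, 3} \<and> (\<forall>p. Suc p < length (x # s) \<longrightarrow> (x # s) ! p \<noteq> (x # s) ! Suc p)"
  then show "set s \<subseteq> {1,2,3}" by auto
  fix p assume "Suc p < length s"
  then show "s ! p \<noteq> s ! Suc p" using a[THEN conjunct2, rule_format, of "Suc p"] by simp
qed

lemma adm_hd: "admissible (x # s) \<Longrightarrow> s \<noteq> [] \<Longrightarrow> x \<noteq> hd s \<and> x \<in> {1,2,3}"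
  unfolding admissible_def
  by (cases s) fastforce+

lemma part1: "admissible s \<Longrightarrow> s \<noteq> [] \<Longrightarrow> last s = 1 \<Longrightarrow> (\<exists>t. of_listed_type t \<and> equiv_seq s t)"
proof (induction s)
  case Nil
  then show ?case by simp
next
  case (Cons x s)
  show ?case
  proof (cases "s = []")
    case True
    then have "x # s = 1 # pw [2,1] 0" using Cons.prems by (simp add: pw_0)
    then show ?thesis using listed_7 eq_refl by metis
  next
    case False
    obtain t where t: "of_listed_type t" "equiv_seq s t"
      using Cons.IH[OF adm_tl[OF Cons.prems(1)] False] Cons.prems(3) False by auto
    have x: "x \<noteq> hd t" "x \<in> {1,2,3}" using adm_hd[OF Cons.prems(1) False] eq_hd[OF t(2)] by auto
    obtain t' where t': "of_listed_type t'" "equiv_seq (x # t) t'" using part3[OF t(1) x(2) x(1)] by blast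
    show ?thesis using eq_trans[OF eq_cons[OF t(2)] t'(2)] t'(1) by blast
  qed
qed

theorem mainTheorem16:
  shows "(\<forall>s. admissible s \<and> s \<noteq> [] \<and> last s = 1 \<longrightarrow>
            (\<exists>t. of_listed_type t \<and> equiv_seq s t))
       \<and> (\<forall>n. equiv_seq ([1] @ pw [2,1] n) ([1] @ pw [3,1] n))
       \<and> (\<forall>\<alpha> i. of_listed_type \<alpha> \<and> i \<in> {1,2,3} \<and> i \<noteq> hd \<alpha> \<longrightarrow>
            (\<exists>t. of_listed_type t \<and> equiv_seq (i # \<alpha>) t))"
  using part1 part3 lem7[of 2 3] by (auto simp: AB_def)

end
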